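(* Let $n\ge 2$, $c_1,\dots,c_n>0$, and fix $i\in\{1,\dots,n\}$. Let $Q_i\in\mathbb{R}^{n\times n}$ be the symmetric matrix with $(Q_i)_{ii}=\frac{n-2}{c_i^2}$, $(Q_i)_{jj}=\frac{1}{c_j^2}$ and $(Q_i)_{ij}=(Q_i)_{ji}=-\frac{1}{c_ic_j}$ for $j\neq i$, and all other entries $0$. Then $Q_i$ has $n-1$ positive eigenvalues, no zero eigenvalue and exactly one negative eigenvalue, i.e. $\mathrm{inertia}(Q_i)=\{n-1,0,1\}$.
   Context: $\mathrm{inertia}(Q)=\{a,b,c\}$ means $Q$ has $a$ positive, $b$ zero and $c$ negative eigenvalues (counted with multiplicity). *)

theory Defs
  imports "Jordan_Normal_Form.Char_Poly"
begin

definition inertia :: "real mat \<Rightarrow> nat \<times> nat \<times> nat" where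
  "inertia A =
    ((\<Sum>a\<in>{a. a > 0 \<and> poly (char_poly A) a = 0}. order a (char_poly A)),
     order 0 (char_poly A),
     (\<Sum>a\<in>{a. a < 0 \<and> poly (char_poly A) a = 0}. order a (char_poly A)))"

text \<open>The matrix Q_i (indices 0-based: i < n).\<close>
definition Qmat :: "nat \<Rightarrow> (nat \<Rightarrow> real) \<Rightarrow> nat \<Rightarrow> real mat" where
  "Qmat n c i = mat n n (\<lambda>(j, k).
     if j = k then (if j = i then (real n - 2) / (c i)\<^sup>2 else 1 / (c j)\<^sup>2)
     else if j = i \<or> k = i then - 1 / (c j * c k)
     else 0)"

end

theory Submission imports Defs begin

lemma perm_arrow_class: fixes p :: "nat \<Rightarrow> nat"
  assumes p: "p permutes {0..<n}" and i: "i < n"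
    and h: "\<And>j. j < n \<Longrightarrow> j \<noteq> i \<Longrightarrow> p j = j \<or> p j = i"
  shows "p = id \<or> (\<exists>j\<in>{0..<n}-{i}. p = Transposition.transpose i j)"
proof (cases "\<exists>j. j < n \<and> j \<noteq> i \<and> p j = i")
  case False
  then have fj: "\<And>j. j < n \<Longrightarrow> j \<noteq> i \<Longrightarrow> p j = j" using h by blast
  have "p i = i"
  proof (rule ccontr)
    assume "p i \<noteq> i"
    moreover have "p i \<in> {0..<n}" using i by (subst permutes_in_image[OF p]) simp
    ultimately have "p (p i) = p i" using fj by auto
    then have "p i = i" using permutes_inj[OF p] by (meson injD)
    with \<open>p i \<noteq> i\<close> show False by simp
  qed
  then have "p = id"
  proof -
    have "p x = x" for x
      using fj \<open>p i = i\<close> permutes_not_in[OF p] by (cases "x < n") auto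
    then show ?thesis by auto
  qed
  then show ?thesis by simp
next
  case True
  then obtain j0 where j0: "j0 < n" "j0 \<noteq> i" "p j0 = i" by blast
  have oth: "p j = j" if "j < n" "j \<noteq> i" "j \<noteq> j0" for j
  proof -
    have "p j \<noteq> i" using j0 that permutes_inj[OF p] by (metis injD)
    then show ?thesis using h that by blast
  qed
  have pi: "p i = j0"
  proof -
    obtain k where k: "p k = j0" using permutes_surj[OF p] by (metis surjD)
    have "k < n"
    proof (rule ccontr)
      assume "\<not> k < n" then have "p k = k" using permutes_not_in[OF p] by auto
      with k j0 \<open>\<not> k < n\<close> show False by simp
    qed
    moreover have "k \<noteq> j0" using k j0 by auto
    moreover have "\<not> (k \<noteq> i)" using oth[of k] k \<open>k < n\<close> \<open>k \<noteq> j0\<close> by auto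
    ultimately show ?thesis using k by auto
  qed
  have "p = Transposition.transpose i j0"
  proof
    fix x show "p x = Transposition.transpose i j0 x"
      using oth pi j0 permutes_not_in[OF p]
      by (cases "x < n") (auto simp: Transposition.transpose_def)
  qed
  then show ?thesis using j0 by auto
qed

lemma det_arrow:
  fixes A :: "'a::comm_ring_1 mat"
  assumes A: "A \<in> carrier_mat n n" and i: "i < n"
    and z: "\<And>j k. j < n \<Longrightarrow> k < n \<Longrightarrow> j \<noteq> k \<Longrightarrow> j \<noteq> i \<Longrightarrow> k \<noteq> i \<Longrightarrow> A $$ (j,k) = 0"
  shows "det A = (\<Prod>k\<in>{0..<n}. A$$(k,k)) -
     (\<Sum>j\<in>{0..<n}-{i}. A$$(i,j) * A$$(j,i) * (\<Prod>k\<in>{0..<n}-{i,j}. A$$(k,k)))"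
proof -
  define N where "N = {0..<n}"
  define F where "F p = signof p * (\<Prod>k\<in>N. A $$ (k, p k))" for p :: "nat \<Rightarrow> nat"
  define S where "S = {p. p permutes N}"
  define tr where "tr j = Transposition.transpose i j" for j
  define T where "T = insert id (tr ` (N - {i}))"
  have iN: "i \<in> N" using i N_def by auto
  have det: "det A = sum F S" unfolding det_def'[OF A] F_def S_def N_def by simp
  have TS: "T \<subseteq> S" unfolding T_def S_def tr_def using iN
    by (auto intro!: permutes_id permutes_swap_id)
  have zero: "F p = 0" if "p \<in> S - T" for p
  proof -
    have p: "p permutes {0..<n}" using that S_def N_def by auto
    have "\<exists>j\<in>N. A $$ (j, p j) = 0"
    proof (rule ccontr)
      assume "\<not> ?thesis"
      then have "\<And>j. j < n \<Longrightarrow> j \<noteq> i \<Longrightarrow> p j = j \<or> p j = i"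
        using z p N_def by (metis atLeastLessThan_iff permutes_in_image atLeast0LessThan lessThan_iff)
      from perm_arrow_class[OF p i this] have "p \<in> T" unfolding T_def tr_def N_def by auto
      with that show False by auto
    qed
    then show ?thesis unfolding F_def using N_def by (simp add: prod_zero)
  qed
  have fS: "finite S" unfolding S_def N_def by (simp add: finite_permutations)
  have "sum F S = sum F T"
    by (rule sum.mono_neutral_right[OF fS TS]) (use zero in auto)
  also have "\<dots> = F id + sum F (tr ` (N - {i}))"
  proof -
    have "id \<notin> tr ` (N - {i})"
    proof
      assume "id \<in> tr ` (N - {i})"
      then obtain j where "j \<in> N - {i}" "id = tr j" by auto
      then have "id i = tr j i" by simp
      then show False using \<open>j \<in> N - {i}\<close> by (simp add: tr_def)
    qed
    then show ?thesis unfolding T_def by (simp add: N_def)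
  qed
  also have "sum F (tr ` (N - {i})) = sum (F \<circ> tr) (N - {i})"
  proof (rule sum.reindex)
    show "inj_on tr (N - {i})"
    proof
      fix x y assume "x \<in> N - {i}" "y \<in> N - {i}" "tr x = tr y"
      then have "tr x i = tr y i" by simp
      then show "x = y" by (simp add: tr_def)
    qed
  qed
  also have "F id = (\<Prod>k\<in>N. A$$(k,k))" unfolding F_def by simp
  also have "(F \<circ> tr) j = - (A$$(i,j) * A$$(j,i) * (\<Prod>k\<in>N-{i,j}. A$$(k,k)))" if j: "j \<in> N - {i}" for j
  proof -
    have ji: "j \<noteq> i" using j by auto
    have "(\<Prod>k\<in>N. A $$ (k, tr j k)) = A $$ (i, tr j i) * (\<Prod>k\<in>N-{i}. A $$ (k, tr j k))"
      using iN by (simp add: N_def prod.remove)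
    also have "(\<Prod>k\<in>N-{i}. A $$ (k, tr j k)) = A $$ (j, tr j j) * (\<Prod>k\<in>N-{i}-{j}. A $$ (k, tr j k))"
      using j by (subst prod.remove[of _ j]) (auto simp: N_def)
    also have "(\<Prod>k\<in>N-{i}-{j}. A $$ (k, tr j k)) = (\<Prod>k\<in>N-{i,j}. A$$(k,k))"
      by (rule prod.cong) (auto simp: tr_def)
    finally show ?thesis using ji unfolding F_def by (simp add: tr_def sign_swap_id)
  qed
  then have "sum (F \<circ> tr) (N - {i}) = (\<Sum>j\<in>N-{i}. - (A$$(i,j) * A$$(j,i) * (\<Prod>k\<in>N-{i,j}. A$$(k,k))))"
    by (rule sum.cong[OF refl])
  finally show ?thesis using det by (simp add: N_def sum_negf)
qed


lemma char_poly_Q: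
  fixes n i :: nat and c :: "nat \<Rightarrow> real"
  assumes n: "n \<ge> 2" and c: "\<And>j. j < n \<Longrightarrow> c j > 0" and i: "i < n"
  defines "d \<equiv> \<lambda>k. 1 / (c k)\<^sup>2"
  defines "K \<equiv> {0..<n} - {i}"
  defines "r \<equiv> (\<Prod>k\<in>K. [:- d k, 1:])"
  shows "char_poly (Qmat n c i) = [:d i, 1:] * r - Polynomial.smult (d i) ([:0,1:] * pderiv r)"
proof (rule poly_ext)
  fix x :: real
  define Q where "Q = Qmat n c i"
  have Q: "Q \<in> carrier_mat n n" unfolding Q_def Qmat_def by simp
  define B where "B = - char_matrix Q x"
  have B: "B \<in> carrier_mat n n" unfolding B_def char_matrix_def using Q by auto
  have Bjk: "B $$ (j,k) = (if j = k then x else 0) - Q $$ (j,k)" if "j < n" "k < n" for j k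
    unfolding B_def char_matrix_def using Q that by auto
  have Qjk: "Q $$ (j,k) = (if j = k then (if j = i then (real n - 2) / (c i)\<^sup>2 else 1 / (c j)\<^sup>2)
     else if j = i \<or> k = i then - 1 / (c j * c k) else 0)" if "j < n" "k < n" for j k
    unfolding Q_def Qmat_def using that by simp
  have "poly (char_poly Q) x = det B" unfolding B_def by (rule char_poly_matrix[OF Q])
  also have "\<dots> = (\<Prod>k\<in>{0..<n}. B$$(k,k)) -
     (\<Sum>j\<in>{0..<n}-{i}. B$$(i,j) * B$$(j,i) * (\<Prod>k\<in>{0..<n}-{i,j}. B$$(k,k)))"
    by (rule det_arrow[OF B i]) (auto simp: Bjk Qjk)
  also have "(\<Prod>k\<in>{0..<n}. B$$(k,k)) = (x - (real n - 2) * d i) * (\<Prod>k\<in>K. x - d k)"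
  proof -
    have "(\<Prod>k\<in>{0..<n}. B$$(k,k)) = B$$(i,i) * (\<Prod>k\<in>K. B$$(k,k))"
      unfolding K_def using i by (simp add: prod.remove)
    also have "(\<Prod>k\<in>K. B$$(k,k)) = (\<Prod>k\<in>K. x - d k)"
      by (rule prod.cong) (auto simp: K_def Bjk Qjk d_def)
    finally show ?thesis using i by (simp add: Bjk Qjk d_def)
  qed
  also have "(\<Sum>j\<in>{0..<n}-{i}. B$$(i,j) * B$$(j,i) * (\<Prod>k\<in>{0..<n}-{i,j}. B$$(k,k)))
     = (\<Sum>j\<in>K. d i * d j * (\<Prod>k\<in>K-{j}. x - d k))"
  proof (rule sum.cong)
    fix j assume "j \<in> K" then have j: "j \<in> {0..<n}-{i}" by (simp add: K_def)
    have ci: "c i \<noteq> 0" and cj: "c j \<noteq> 0" using c[of i] c[of j] i j by auto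
    have "B$$(i,j) * B$$(j,i) = d i * d j"
      using j i ci cj by (auto simp: Bjk Qjk d_def field_simps power2_eq_square)
    moreover have "(\<Prod>k\<in>{0..<n}-{i,j}. B$$(k,k)) = (\<Prod>k\<in>K-{j}. x - d k)"
      by (rule prod.cong) (auto simp: K_def Bjk Qjk d_def)
    ultimately show "B$$(i,j) * B$$(j,i) * (\<Prod>k\<in>{0..<n}-{i,j}. B$$(k,k)) = d i * d j * (\<Prod>k\<in>K-{j}. x - d k)"
      by simp
  qed (simp add: K_def)
  also have "(x - (real n - 2) * d i) * (\<Prod>k\<in>K. x - d k) - (\<Sum>j\<in>K. d i * d j * (\<Prod>k\<in>K-{j}. x - d k))
     = poly ([:d i, 1:] * r - Polynomial.smult (d i) ([:0,1:] * pderiv r)) x"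
  proof -
    define R where "R = (\<Prod>k\<in>K. x - d k)"
    define R' where "R' = (\<Sum>j\<in>K. \<Prod>k\<in>K-{j}. x - d k)"
    have fK: "finite K" unfolding K_def by simp
    have cK: "card K = n - 1" unfolding K_def using i by simp
    have pr: "poly r x = R" unfolding r_def R_def by (simp add: poly_prod)
    have pdr: "poly (pderiv r) x = R'" unfolding r_def R'_def
      by (simp add: pderiv_prod poly_sum poly_prod pderiv_pCons)
    have "(\<Sum>j\<in>K. d j * (\<Prod>k\<in>K-{j}. x - d k)) = (\<Sum>j\<in>K. x * (\<Prod>k\<in>K-{j}. x - d k) - R)"
    proof (rule sum.cong[OF refl])
      fix j assume "j \<in> K"
      then have "R = (x - d j) * (\<Prod>k\<in>K-{j}. x - d k)" unfolding R_def using fK by (simp add: prod.remove)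
      then show "d j * (\<Prod>k\<in>K-{j}. x - d k) = x * (\<Prod>k\<in>K-{j}. x - d k) - R" by (simp add: algebra_simps)
    qed
    also have "\<dots> = x * R' - real (n - 1) * R" unfolding R'_def
      by (simp add: sum_subtractf sum_distrib_left cK)
    finally have eq: "(\<Sum>j\<in>K. d i * d j * (\<Prod>k\<in>K-{j}. x - d k)) = d i * (x * R' - real (n - 1) * R)"
      by (simp add: sum_distrib_left[symmetric] mult.assoc)
    have n1: "real (n - Suc 0) = real n - 1" using n by simp
    show ?thesis unfolding eq by (simp add: pr pdr R_def[symmetric] n1 algebra_simps)
  qed
  finally show "poly (char_poly (Qmat n c i)) x = poly ([:d i, 1:] * r - Polynomial.smult (d i) ([:0,1:] * pderiv r)) x"
    unfolding Q_def .
qed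

lemma g_deriv:
  fixes r P :: "real poly" and \<delta> z :: real
  assumes P: "P = [:\<delta>, 1:] * r - Polynomial.smult \<delta> ([:0,1:] * pderiv r)"
    and dp: "\<delta> > 0" and z: "z \<noteq> 0"
  shows "((\<lambda>x. poly r x * exp (- x / \<delta>) / x) has_real_derivative
          (- poly P z * exp (- z / \<delta>) / (\<delta> * z\<^sup>2))) (at z)"
proof -
  have "((\<lambda>x. poly r x * exp (- x / \<delta>) / x) has_real_derivative
     ((poly (pderiv r) z * exp (- z / \<delta>) + poly r z * (exp (- z / \<delta>) * (- 1 / \<delta>))) * z
       - poly r z * exp (- z / \<delta>) * 1) / (z * z)) (at z)"
  proof -
    have e: "((\<lambda>x. exp (- x / \<delta>)) has_real_derivative (exp (- z / \<delta>) * (- 1 / \<delta>))) (at z)"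
      using dp by (auto intro!: derivative_eq_intros simp: field_simps)
    have m: "((\<lambda>x. poly r x * exp (- x / \<delta>)) has_real_derivative
       (poly (pderiv r) z * exp (- z / \<delta>) + poly r z * (exp (- z / \<delta>) * (- 1 / \<delta>)))) (at z)"
      using DERIV_mult[OF poly_DERIV e] by (simp add: algebra_simps)
    show ?thesis by (rule DERIV_divide[OF m DERIV_ident z])
  qed
  moreover have "((poly (pderiv r) z * exp (- z / \<delta>) + poly r z * (exp (- z / \<delta>) * (- 1 / \<delta>))) * z
       - poly r z * exp (- z / \<delta>) * 1) / (z * z) = - poly P z * exp (- z / \<delta>) / (\<delta> * z\<^sup>2)"
    using z dp unfolding P by (simp add: field_simps power2_eq_square)
  ultimately show ?thesis by simp
qed


lemma sum_order_prod_linear: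
  fixes d :: "nat \<Rightarrow> real"
  assumes "finite K"
  shows "(\<Sum>e\<in>d ` K. order e (\<Prod>k\<in>K. [:- d k, 1:])) = card K"
  using assms
proof (induction K rule: finite_induct)
  case empty
  then show ?case by simp
next
  case (insert k K)
  define r where "r = (\<Prod>k\<in>K. [:- d k, 1:])"
  have r0: "r \<noteq> 0" unfolding r_def using insert by simp
  have rk: "(\<Prod>k\<in>insert k K. [:- d k, 1:]) = [:- d k, 1:] * r"
    unfolding r_def using insert by simp
  have ord: "order e ([:- d k, 1:] * r) = (if e = d k then 1 else 0) + order e r" for e
  proof -
    have "order e ([:- d k, 1:] * r) = order e [:- d k, 1:] + order e r"
      using r0 by (intro order_mult) (simp del: mult_pCons_left pCons_0_as_mult add: no_zero_divisors)
    moreover have "order e [:- d k, 1:] = (if e = d k then 1 else 0)"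
    proof (cases "e = d k")
      case True
      then show ?thesis using order_power_n_n[of e 1] by simp
    next
      case False
      then have "poly [:- d k, 1:] e \<noteq> 0" by simp
      then show ?thesis using order_root[of "[:- d k, 1:]" e] False by auto
    qed
    ultimately show ?thesis by simp
  qed
  have "(\<Sum>e\<in>d ` insert k K. order e ([:- d k, 1:] * r))
      = (\<Sum>e\<in>insert (d k) (d ` K). (if e = d k then 1 else 0)) + (\<Sum>e\<in>insert (d k) (d ` K). order e r)"
    unfolding ord by (simp only: image_insert sum.distrib)
  also have "(\<Sum>e\<in>insert (d k) (d ` K). (if e = d k then 1 else 0)) = (1::nat)"
    using insert by (simp add: sum.delta)
  also have "(\<Sum>e\<in>insert (d k) (d ` K). order e r) = (\<Sum>e\<in>d ` K. order e r)"
  proof (cases "d k \<in> d ` K")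
    case True
    then show ?thesis by (simp add: insert_absorb)
  next
    case False
    have "poly r (d k) \<noteq> 0" unfolding r_def using False insert.hyps(1) by (auto simp: poly_prod prod_zero_iff)
    then have "order (d k) r = 0" using order_root r0 by blast
    then show ?thesis using False insert by simp
  qed
  finally show ?case using insert rk r_def by simp
qed


context
  fixes K :: "nat set" and d :: "nat \<Rightarrow> real" and \<delta> :: real and r P :: "real poly"
  assumes fK: "finite K" and Kne: "K \<noteq> {}" and dpos: "\<And>k. k \<in> K \<Longrightarrow> d k > 0" and dp: "\<delta> > 0"
    and r: "r = (\<Prod>k\<in>K. [:- d k, 1:])"
    and P: "P = [:\<delta>, 1:] * r - Polynomial.smult \<delta> ([:0,1:] * pderiv r)"
    and lc: "lead_coeff P = 1" and degP: "degree P = Suc (card K)"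
begin

lemma P_nz: "P \<noteq> 0" using lc by auto

lemma r_nz: "r \<noteq> 0" unfolding r using fK by simp

lemma poly_r: "poly r x = (\<Prod>k\<in>K. x - d k)" unfolding r by (simp add: poly_prod)

lemma r_root: "e \<in> d ` K \<Longrightarrow> poly r e = 0"
  unfolding poly_r using fK by (auto simp: prod_zero_iff)

lemma P0: "poly P 0 \<noteq> 0"
proof -
  have "poly P 0 = \<delta> * poly r 0" unfolding P by simp
  moreover have "poly r 0 \<noteq> 0" unfolding poly_r using fK dpos by (auto simp: prod_zero_iff dest!: dpos)
  ultimately show ?thesis using dp by simp
qed

definition g :: "real \<Rightarrow> real" where "g x = poly r x * exp (- x / \<delta>) / x"

lemma gd: "z \<noteq> 0 \<Longrightarrow> (g has_real_derivative (- poly P z * exp (- z / \<delta>) / (\<delta> * z\<^sup>2))) (at z)"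
  unfolding g_def[abs_def] by (rule g_deriv[OF P dp])

lemma g_cont: "0 < a \<Longrightarrow> continuous_on {a..b} g"
  by (intro continuous_at_imp_continuous_on ballI DERIV_isCont[OF gd]) auto

lemma g_diff: "0 < x \<Longrightarrow> g differentiable (at x)"
  using gd[of x] real_differentiable_def by auto

lemma xi_exists:
  assumes e: "e \<in> d ` K"
  shows "\<exists>\<xi>. e < \<xi> \<and> poly P \<xi> = 0 \<and> (\<forall>e'\<in>d ` K. e < e' \<longrightarrow> \<xi> < e')"
proof -
  have epos: "e > 0" using e dpos by auto
  have ge: "g e = 0" unfolding g_def using r_root[OF e] by simp
  define U where "U = {e'\<in>d ` K. e < e'}"
  have fU: "finite U" unfolding U_def using fK by simp
  show ?thesis
  proof (cases "U = {}")
    case False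
    define b where "b = Min U"
    have bU: "b \<in> U" unfolding b_def using fU False by simp
    have bmin: "\<And>e'. e' \<in> U \<Longrightarrow> b \<le> e'" unfolding b_def using fU by simp
    have eb: "e < b" using bU U_def by auto
    have gb: "g b = 0" unfolding g_def using r_root bU U_def by auto
    obtain z where z: "e < z" "z < b" "DERIV g z :> 0"
      using Rolle[OF eb, of g] ge gb g_cont[OF epos] g_diff epos by force
    have zpos: "z > 0" using z epos by simp
    have "- poly P z * exp (- z / \<delta>) / (\<delta> * z\<^sup>2) = 0"
      using DERIV_unique[OF gd z(3)] zpos by simp
    then have "poly P z = 0" using zpos dp by simp
    moreover have "\<forall>e'\<in>d ` K. e < e' \<longrightarrow> z < e'"
      using bmin z U_def by force
    ultimately show ?thesis using z by blast
  next
    case True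
    then have dle: "\<And>k. k \<in> K \<Longrightarrow> d k \<le> e" unfolding U_def by force
    have rpos: "poly r x > 0" if "x > e" for x
      unfolding poly_r using dle that by (intro prod_pos) force
    have g1: "g (e + 1) > 0" unfolding g_def using rpos[of "e+1"] epos by simp
    obtain l z where z: "e < z" "z < e + 1" "DERIV g z :> l" "g (e + 1) - g e = (e + 1 - e) * l"
      using MVT[of e "e+1" g] g_cont[OF epos] g_diff epos by force
    have zpos: "z > 0" using z epos by simp
    have "l > 0" using z(4) g1 ge by simp
    then have "- poly P z * exp (- z / \<delta>) / (\<delta> * z\<^sup>2) > 0"
      using DERIV_unique[OF gd z(3)] zpos by simp
    then have Pz: "poly P z < 0" using zpos dp by (simp add: divide_less_0_iff mult_less_0_iff)
    obtain X where X: "\<And>x. x \<ge> X \<Longrightarrow> poly P x \<ge> 1"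
      using poly_pinfty_gt_lc[of P] lc by auto
    define b where "b = max X (z + 1)"
    have "poly P b > 0" using X[of b] b_def by simp
    moreover have "z < b" unfolding b_def by simp
    ultimately obtain \<xi> where "z < \<xi>" "\<xi> < b" "poly P \<xi> = 0"
      using poly_IVT_pos[OF _ Pz] by blast
    then show ?thesis using z True U_def by auto
  qed
qed


lemma order_bound:
  assumes e: "e \<in> d ` K"
  shows "order e r \<le> Suc (order e P)"
proof -
  define m where "m = order e (pderiv r)"
  have ore: "order e r = Suc m" unfolding m_def by (rule order_pderiv[OF r_nz r_root[OF e]])
  have d1: "[:-e, 1:] ^ m dvd r" using ore order_divides[of e m r] by simp
  have d2: "[:-e, 1:] ^ m dvd pderiv r" unfolding m_def by (rule order_1)
  have "[:-e, 1:] ^ m dvd P" unfolding P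
    by (intro dvd_diff dvd_mult dvd_smult d1 d2)
  then have "m \<le> order e P" using order_divides P_nz by blast
  then show ?thesis using ore by simp
qed

lemma pos_sum: "(\<Sum>a\<in>{a. a > 0 \<and> poly P a = 0}. order a P) \<ge> card K"
proof -
  define E where "E = d ` K"
  have fE: "finite E" unfolding E_def using fK by simp
  obtain \<xi> where \<xi>: "\<And>e. e \<in> E \<Longrightarrow> e < \<xi> e \<and> poly P (\<xi> e) = 0 \<and> (\<forall>e'\<in>E. e < e' \<longrightarrow> \<xi> e < e')"
    using xi_exists unfolding E_def by metis
  define Pos where "Pos = {a. a > 0 \<and> poly P a = 0}"
  have fPos: "finite Pos" unfolding Pos_def using poly_roots_finite[OF P_nz] by simp
  have Epos: "\<And>e. e \<in> E \<Longrightarrow> e > 0" unfolding E_def using dpos by auto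
  have inj: "inj_on \<xi> E"
  proof
    fix x y assume xy: "x \<in> E" "y \<in> E" "\<xi> x = \<xi> y"
    show "x = y"
    proof (rule ccontr)
      assume "x \<noteq> y"
      then consider "x < y" | "y < x" by linarith
      then show False
      proof cases
        case 1 then have "\<xi> x < y" using \<xi>[OF xy(1)] xy(2) by auto
        moreover have "y < \<xi> y" using \<xi>[OF xy(2)] by auto
        ultimately show False using xy(3) by simp
      next
        case 2 then have "\<xi> y < x" using \<xi>[OF xy(2)] xy(1) by auto
        moreover have "x < \<xi> x" using \<xi>[OF xy(1)] by auto
        ultimately show False using xy(3) by simp
      qed
    qed
  qed
  have disj: "E \<inter> \<xi> ` E = {}"
  proof (rule ccontr)
    assume "E \<inter> \<xi> ` E \<noteq> {}"
    then obtain e where e: "e \<in> E" "\<xi> e \<in> E" by auto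
    then have "\<xi> e < \<xi> e" using \<xi>[OF e(1)] by auto
    then show False by simp
  qed
  have "card K = (\<Sum>e\<in>E. order e r)"
    unfolding E_def r using sum_order_prod_linear[OF fK, of d] by simp
  also have "\<dots> \<le> (\<Sum>e\<in>E. order e P + order (\<xi> e) P)"
  proof (rule sum_mono)
    fix e assume e: "e \<in> E"
    have "order (\<xi> e) P \<noteq> 0" using \<xi>[OF e] order_root P_nz by blast
    then show "order e r \<le> order e P + order (\<xi> e) P"
      using order_bound[of e] e unfolding E_def by simp
  qed
  also have "\<dots> = (\<Sum>e\<in>E. order e P) + (\<Sum>e\<in>\<xi> ` E. order e P)"
    by (simp add: sum.distrib sum.reindex[OF inj])
  also have "\<dots> = (\<Sum>e\<in>E \<union> \<xi> ` E. order e P)"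
    by (rule sum.union_disjoint[symmetric]) (use fE disj in auto)
  also have "\<dots> = (\<Sum>e\<in>(E \<union> \<xi> ` E) \<inter> Pos. order e P)"
  proof (rule sum.mono_neutral_right)
    show "finite (E \<union> \<xi> ` E)" using fE by simp
    show "(E \<union> \<xi> ` E) \<inter> Pos \<subseteq> E \<union> \<xi> ` E" by auto
    show "\<forall>x\<in>E \<union> \<xi> ` E - (E \<union> \<xi> ` E) \<inter> Pos. order x P = 0"
    proof
      fix x assume x: "x \<in> E \<union> \<xi> ` E - (E \<union> \<xi> ` E) \<inter> Pos"
      have "x > 0" using x Epos \<xi> by fastforce
      then have "poly P x \<noteq> 0" using x Pos_def by auto
      then show "order x P = 0" using order_root P_nz by blast
    qed
  qed
  also have "\<dots> \<le> (\<Sum>e\<in>Pos. order e P)"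
    by (rule sum_mono2[OF fPos]) auto
  finally show ?thesis unfolding Pos_def .
qed

lemma neg_root: "\<exists>a<0. poly P a = 0"
proof -
  define m where "m = card K"
  define P2 where "P2 = Polynomial.smult ((-1) ^ Suc m) (pcompose P [:0, -1:])"
  have pP2: "poly P2 x = (-1) ^ Suc m * poly P (- x)" for x
    unfolding P2_def by (simp add: poly_pcompose)
  have "lead_coeff (pcompose P [:0, -1:]) = lead_coeff P * (-1) ^ degree P"
    by (subst lead_coeff_comp) auto
  then have lc2: "lead_coeff P2 = 1"
    unfolding P2_def using lc degP m_def by (simp add: degree_pcompose)
  have "poly P 0 = \<delta> * poly r 0" unfolding P by simp
  also have "poly r 0 = (\<Prod>k\<in>K. - d k)" unfolding poly_r by simp
  also have "\<dots> = (-1) ^ m * (\<Prod>k\<in>K. d k)" unfolding m_def by (simp add: prod_uminus)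
  finally have "poly P2 0 = - (\<delta> * (\<Prod>k\<in>K. d k))"
    unfolding pP2 by simp
  moreover have "(\<Prod>k\<in>K. d k) > 0" using dpos by (intro prod_pos) auto
  ultimately have n0: "poly P2 0 < 0" using dp by simp
  obtain X where X: "\<And>x. x \<ge> X \<Longrightarrow> poly P2 x \<ge> 1"
    using poly_pinfty_gt_lc[of P2] lc2 by auto
  define b where "b = max X 1"
  have "poly P2 b > 0" using X[of b] b_def by simp
  then obtain x where "0 < x" "x < b" "poly P2 x = 0"
    using poly_IVT_pos[OF _ n0, of b] b_def by force
  then show ?thesis using pP2 by (intro exI[of _ "-x"]) auto
qed

end


theorem mainTheorem5:
  fixes n i :: nat and c :: "nat \<Rightarrow> real"
  assumes "n \<ge> 2" and "\<And>j. j < n \<Longrightarrow> c j > 0" and "i < n"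
  shows "inertia (Qmat n c i) = (n - 1, 0, 1)"
proof -
  note n = assms(1) and c = assms(2) and i = assms(3)
  define d where "d = (\<lambda>k. 1 / (c k)\<^sup>2)"
  define K where "K = {0..<n} - {i}"
  define r where "r = (\<Prod>k\<in>K. [:- d k, 1:])"
  define P where "P = [:d i, 1:] * r - Polynomial.smult (d i) ([:0,1:] * pderiv r)"
  have cp: "char_poly (Qmat n c i) = P"
    unfolding P_def r_def K_def d_def by (rule char_poly_Q[OF n c i])
  have Qc: "Qmat n c i \<in> carrier_mat n n" unfolding Qmat_def by simp
  have dm: "degree P = n \<and> coeff P n = 1" using degree_monic_char_poly[OF Qc] cp by simp
  have fK: "finite K" unfolding K_def by simp
  have cK: "card K = n - 1" unfolding K_def using i by simp
  have Kne: "K \<noteq> {}" using cK n by auto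
  have dpos: "\<And>k. k \<in> K \<Longrightarrow> d k > 0" unfolding K_def d_def using c by (auto dest!: c)
  have dp: "d i > 0" unfolding d_def using c[OF i] by simp
  have lc: "lead_coeff P = 1" using dm by simp
  have degP: "degree P = Suc (card K)" using dm cK n by simp
  note facts = fK Kne dpos dp r_def P_def lc degP
  have Pnz: "P \<noteq> 0" using P_nz[OF facts] .
  define Pos where "Pos = {a. a > 0 \<and> poly P a = 0}"
  define Neg where "Neg = {a. a < 0 \<and> poly P a = 0}"
  have pos: "(\<Sum>a\<in>Pos. order a P) \<ge> n - 1" using pos_sum[OF facts] cK unfolding Pos_def by simp
  obtain a where a: "a < 0" "poly P a = 0" using neg_root[OF facts] by blast
  have P0: "poly P 0 \<noteq> 0" using P0[OF facts] .
  have fR: "finite {x. poly P x = 0}" using poly_roots_finite[OF Pnz] .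
  have R: "{x. poly P x = 0} = Pos \<union> Neg"
  proof -
    have "poly P x = 0 \<Longrightarrow> x > 0 \<or> x < 0" for x using P0 by (cases "x = 0") (auto simp: neq_iff)
    then show ?thesis unfolding Pos_def Neg_def by auto
  qed
  have fPos: "finite Pos" and fNeg: "finite Neg" using fR R by auto
  have "(\<Sum>x\<in>{x. poly P x = 0}. order x P) = (\<Sum>x\<in>Pos. order x P) + (\<Sum>x\<in>Neg. order x P)"
    unfolding R by (rule sum.union_disjoint) (use fPos fNeg in \<open>auto simp: Pos_def Neg_def\<close>)
  moreover have "(\<Sum>x | poly P x = 0. order x P) \<le> n" using sum_order_le_degree[OF Pnz] dm by simp
  moreover have "(\<Sum>x\<in>Neg. order x P) \<ge> 1"
  proof -
    have "order a P \<ge> 1" using a order_root Pnz by (metis less_one not_le)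
    moreover have "order a P \<le> (\<Sum>x\<in>Neg. order x P)"
      by (rule member_le_sum) (use a fNeg in \<open>auto simp: Neg_def\<close>)
    ultimately show ?thesis by simp
  qed
  ultimately have s1: "(\<Sum>x\<in>Pos. order x P) = n - 1" and s2: "(\<Sum>x\<in>Neg. order x P) = 1"
    using pos n by linarith+
  have o0: "order 0 P = 0" using P0 order_root by blast
  show ?thesis unfolding inertia_def cp using s1 s2 o0 unfolding Pos_def Neg_def by simp
qed

end
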